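(* Let $P=(X,\leq_P)$ be a finite poset and let $M\subseteq X$. For every down-set $N$ of the induced sub-poset $P|_M$ define $$M{\updownarrow}_P N := {\uparrow}_P(M\setminus N)\ \cup\ {\downarrow}_P N,$$ and let $$\mathcal{D}_{M,N}(P):=\{D\in\mathcal{D}(P) : D\cap M=N\}.$$ Then for every $N\in\mathcal{D}(P|_M)$ the mapping $$\phi_{M,N}:\mathcal{D}_{M,N}(P)\to\mathcal{D}\big(P-M{\updownarrow}_P N\big),\qquad D\mapsto D\setminus {\downarrow}_P N,$$ is an order isomorphism (with respect to set inclusion), with inverse $\phi_{M,N}^{-1}(D')=D'\cup{\downarrow}_P N$ for all $D'\in\mathcal{D}(P-M{\updownarrow}_P N)$. In consequence, $$d(P)=\sum_{N\in\mathcal{D}(P|_M)} d\big(P-M{\updownarrow}_P N\big).$$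
   Context: For a finite poset $P=(X,\leq_P)$: a subset $Y\subseteq X$ is a down-set if $x\leq_P y$ and $y\in Y$ imply $x\in Y$. $\mathcal{D}(P)$ denotes the set of down-sets of $P$ and $d(P):=\#\mathcal{D}(P)$. For $y\in X$, ${\downarrow}_P y=\{x\in X: x\leq_P y\}$, ${\uparrow}_P y=\{x\in X: y\leq_P x\}$, and for $V\subseteq X$, ${\downarrow}_P V=\bigcup_{v\in V}{\downarrow}_P v$, ${\uparrow}_P V=\bigcup_{v\in V}{\uparrow}_P v$. For $Y\subseteq X$, $P|_Y$ is the induced sub-poset $(Y,\leq_P\cap(Y\times Y))$, and $P-Y$ denotes $P|_{X\setminus Y}$. *)

theory Defs
  imports Main
begin

text \<open>A finite poset is represented by a carrier set X and a relation le,
  required to be a partial order on X. Induced sub-posets keep the same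
  relation with a smaller carrier.\<close>

definition is_poset :: "'a set \<Rightarrow> ('a \<Rightarrow> 'a \<Rightarrow> bool) \<Rightarrow> bool" where
  "is_poset X le \<longleftrightarrow>
     (\<forall>x\<in>X. le x x) \<and>
     (\<forall>x\<in>X. \<forall>y\<in>X. le x y \<and> le y x \<longrightarrow> x = y) \<and>
     (\<forall>x\<in>X. \<forall>y\<in>X. \<forall>z\<in>X. le x y \<and> le y z \<longrightarrow> le x z)"

definition down_sets :: "'a set \<Rightarrow> ('a \<Rightarrow> 'a \<Rightarrow> bool) \<Rightarrow> 'a set set" where
  "down_sets X le = {Y. Y \<subseteq> X \<and> (\<forall>x\<in>X. \<forall>y\<in>Y. le x y \<longrightarrow> x \<in> Y)}"

definition num_down_sets :: "'a set \<Rightarrow> ('a \<Rightarrow> 'a \<Rightarrow> bool) \<Rightarrow> nat" where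
  "num_down_sets X le = card (down_sets X le)"

definition down_cl :: "'a set \<Rightarrow> ('a \<Rightarrow> 'a \<Rightarrow> bool) \<Rightarrow> 'a set \<Rightarrow> 'a set" where
  "down_cl X le V = {x\<in>X. \<exists>v\<in>V. le x v}"

definition up_cl :: "'a set \<Rightarrow> ('a \<Rightarrow> 'a \<Rightarrow> bool) \<Rightarrow> 'a set \<Rightarrow> 'a set" where
  "up_cl X le V = {x\<in>X. \<exists>v\<in>V. le v x}"

definition updown :: "'a set \<Rightarrow> ('a \<Rightarrow> 'a \<Rightarrow> bool) \<Rightarrow> 'a set \<Rightarrow> 'a set \<Rightarrow> 'a set" where
  "updown X le M N = up_cl X le (M - N) \<union> down_cl X le N"

definition down_sets_MN :: "'a set \<Rightarrow> ('a \<Rightarrow> 'a \<Rightarrow> bool) \<Rightarrow> 'a set \<Rightarrow> 'a set \<Rightarrow> 'a set set" where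
  "down_sets_MN X le M N = {D \<in> down_sets X le. D \<inter> M = N}"

end

theory Submission
  imports Defs
begin

lemma part_main:
  fixes X :: "'a set" and le :: "'a \<Rightarrow> 'a \<Rightarrow> bool" and M :: "'a set"
  assumes P: "is_poset X le" and MX: "M \<subseteq> X" and N: "N \<in> down_sets M le"
  shows "bij_betw (\<lambda>D. D - down_cl X le N) (down_sets_MN X le M N)
                     (down_sets (X - updown X le M N) le)
          \<and> (\<forall>D1 \<in> down_sets_MN X le M N. \<forall>D2 \<in> down_sets_MN X le M N.
                D1 \<subseteq> D2 \<longleftrightarrow> D1 - down_cl X le N \<subseteq> D2 - down_cl X le N)
          \<and> (\<forall>D' \<in> down_sets (X - updown X le M N) le.
                D' \<union> down_cl X le N \<in> down_sets_MN X le M N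
              \<and> (D' \<union> down_cl X le N) - down_cl X le N = D')"
proof -
  define dN where "dN = down_cl X le N"
  define U where "U = updown X le M N"
  have refl: "\<And>x. x \<in> X \<Longrightarrow> le x x" and trans: "\<And>x y z. x \<in> X \<Longrightarrow> y \<in> X \<Longrightarrow> z \<in> X \<Longrightarrow> le x y \<Longrightarrow> le y z \<Longrightarrow> le x z"
    using P unfolding is_poset_def by blast+
  have NM: "N \<subseteq> M" and Nd: "\<And>x y. x \<in> M \<Longrightarrow> y \<in> N \<Longrightarrow> le x y \<Longrightarrow> x \<in> N"
    using N unfolding down_sets_def by auto
  have NX: "N \<subseteq> X" using NM MX by auto
  have dNU: "dN \<subseteq> U" unfolding dN_def U_def updown_def by auto
  have NdN: "N \<subseteq> dN" unfolding dN_def down_cl_def using NX refl by auto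
  have sup: "dN \<subseteq> D" if "D \<in> down_sets_MN X le M N" for D
  proof
    fix x assume "x \<in> dN"
    then obtain v where "x \<in> X" "v \<in> N" "le x v" unfolding dN_def down_cl_def by auto
    moreover have "v \<in> D" using that \<open>v \<in> N\<close> unfolding down_sets_MN_def by auto
    ultimately show "x \<in> D" using that unfolding down_sets_MN_def down_sets_def by auto
  qed
  have fwd: "D - dN \<in> down_sets (X - U) le" if D: "D \<in> down_sets_MN X le M N" for D
  proof -
    have DX: "D \<subseteq> X" and Dd: "\<And>x y. x \<in> X \<Longrightarrow> y \<in> D \<Longrightarrow> le x y \<Longrightarrow> x \<in> D" and DM: "D \<inter> M = N"
      using D unfolding down_sets_MN_def down_sets_def by auto
    have "D \<inter> up_cl X le (M - N) = {}"
    proof (rule ccontr)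
      assume "D \<inter> up_cl X le (M - N) \<noteq> {}"
      then obtain x m where "x \<in> D" "m \<in> M - N" "le m x" unfolding up_cl_def by auto
      then have "m \<in> X" using MX by blast
      then have "m \<in> D" using Dd \<open>x \<in> D\<close> \<open>le m x\<close> by blast
      then show False using DM \<open>m \<in> M - N\<close> by auto
    qed
    have sub: "D - dN \<subseteq> X - U"
    proof
      fix x assume x: "x \<in> D - dN"
      then have "x \<notin> up_cl X le (M - N)" using \<open>D \<inter> up_cl X le (M - N) = {}\<close> by blast
      then show "x \<in> X - U" using x DX unfolding U_def updown_def dN_def by blast
    qed
    have "\<forall>x\<in>X - U. \<forall>y\<in>D - dN. le x y \<longrightarrow> x \<in> D - dN"
    proof (intro ballI impI)
      fix x y assume "x \<in> X - U" "y \<in> D - dN" "le x y"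
      then have "x \<in> D" using Dd by blast
      moreover have "x \<notin> dN" using \<open>x \<in> X - U\<close> dNU by blast
      ultimately show "x \<in> D - dN" by blast
    qed
    then show ?thesis using sub unfolding down_sets_def by blast
  qed
  have bwd: "D' \<union> dN \<in> down_sets_MN X le M N" if D': "D' \<in> down_sets (X - U) le" for D'
  proof -
    have D'X: "D' \<subseteq> X - U" and D'd: "\<And>x y. x \<in> X - U \<Longrightarrow> y \<in> D' \<Longrightarrow> le x y \<Longrightarrow> x \<in> D'"
      using D' unfolding down_sets_def by auto
    have dNX: "dN \<subseteq> X" unfolding dN_def down_cl_def by auto
    have closed: "x \<in> D' \<union> dN" if "x \<in> X" "y \<in> D' \<union> dN" "le x y" for x y
    proof (cases "y \<in> dN")
      case True
      then obtain v where "v \<in> N" "le y v" "y \<in> X" unfolding dN_def down_cl_def by auto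
      then have "le x v" using trans[of x y v] that NX by auto
      then show ?thesis using \<open>v \<in> N\<close> that unfolding dN_def down_cl_def by auto
    next
      case False
      then have yD: "y \<in> D'" using that by auto
      show ?thesis
      proof (cases "x \<in> U")
        case True
        show ?thesis
        proof (cases "x \<in> dN")
          case False
          then have "x \<in> up_cl X le (M - N)" using True unfolding U_def updown_def dN_def by auto
          then obtain m where "m \<in> M - N" "le m x" unfolding up_cl_def by auto
          then have "le m y" using trans[of m x y] MX that yD D'X by auto
          then have "y \<in> U" using \<open>m \<in> M - N\<close> yD D'X unfolding U_def updown_def up_cl_def by auto
          then show ?thesis using yD D'X by auto
        qed simp
      next
        case False
        then show ?thesis using D'd that yD by auto
      qed
    qed
    have "(D' \<union> dN) \<inter> M = N"
    proof
      show "N \<subseteq> (D' \<union> dN) \<inter> M" using NdN NM by auto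
      show "(D' \<union> dN) \<inter> M \<subseteq> N"
      proof
        fix x assume x: "x \<in> (D' \<union> dN) \<inter> M"
        show "x \<in> N"
        proof (cases "x \<in> dN")
          case True
          then obtain v where "v \<in> N" "le x v" unfolding dN_def down_cl_def by auto
          then show ?thesis using Nd x by auto
        next
          case False
          then have "x \<in> D'" using x by auto
          show ?thesis
          proof (rule ccontr)
            assume "x \<notin> N"
            then have "x \<in> up_cl X le (M - N)" using x MX refl unfolding up_cl_def by auto
            then show False using \<open>x \<in> D'\<close> D'X unfolding U_def updown_def by auto
          qed
        qed
      qed
    qed
    then show ?thesis unfolding down_sets_MN_def down_sets_def using closed D'X dNX by auto
  qed
  have inv2: "(D' \<union> dN) - dN = D'" if "D' \<in> down_sets (X - U) le" for D'
    using that dNU unfolding down_sets_def by auto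
  have inv1: "(D - dN) \<union> dN = D" if "D \<in> down_sets_MN X le M N" for D
    using sup[OF that] by auto
  have bij: "bij_betw (\<lambda>D. D - dN) (down_sets_MN X le M N) (down_sets (X - U) le)"
  proof (rule bij_betw_byWitness[where f' = "\<lambda>D'. D' \<union> dN"])
    show "\<forall>a\<in>down_sets_MN X le M N. a - dN \<union> dN = a" using inv1 by auto
    show "\<forall>a'\<in>down_sets (X - U) le. a' \<union> dN - dN = a'" using inv2 by auto
    show "(\<lambda>D. D - dN) ` down_sets_MN X le M N \<subseteq> down_sets (X - U) le" using fwd by auto
    show "(\<lambda>D'. D' \<union> dN) ` down_sets (X - U) le \<subseteq> down_sets_MN X le M N" using bwd by auto
  qed
  have ord: "\<forall>D1 \<in> down_sets_MN X le M N. \<forall>D2 \<in> down_sets_MN X le M N.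
                D1 \<subseteq> D2 \<longleftrightarrow> D1 - dN \<subseteq> D2 - dN"
    using sup by blast
  show ?thesis unfolding dN_def[symmetric] U_def[symmetric]
    using bij ord bwd inv2 by (intro conjI ballI) auto
qed

theorem theorem1:
  fixes X :: "'a set" and le :: "'a \<Rightarrow> 'a \<Rightarrow> bool" and M :: "'a set"
  assumes "finite X" and "is_poset X le" and "M \<subseteq> X"
  shows "(\<forall>N \<in> down_sets M le.
            bij_betw (\<lambda>D. D - down_cl X le N) (down_sets_MN X le M N)
                     (down_sets (X - updown X le M N) le)
          \<and> (\<forall>D1 \<in> down_sets_MN X le M N. \<forall>D2 \<in> down_sets_MN X le M N.
                D1 \<subseteq> D2 \<longleftrightarrow> D1 - down_cl X le N \<subseteq> D2 - down_cl X le N)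
          \<and> (\<forall>D' \<in> down_sets (X - updown X le M N) le.
                D' \<union> down_cl X le N \<in> down_sets_MN X le M N
              \<and> (D' \<union> down_cl X le N) - down_cl X le N = D'))
       \<and> num_down_sets X le
           = (\<Sum>N \<in> down_sets M le. num_down_sets (X - updown X le M N) le)"
proof -
  have A: "\<forall>N \<in> down_sets M le.
            bij_betw (\<lambda>D. D - down_cl X le N) (down_sets_MN X le M N)
                     (down_sets (X - updown X le M N) le)
          \<and> (\<forall>D1 \<in> down_sets_MN X le M N. \<forall>D2 \<in> down_sets_MN X le M N.
                D1 \<subseteq> D2 \<longleftrightarrow> D1 - down_cl X le N \<subseteq> D2 - down_cl X le N)
          \<and> (\<forall>D' \<in> down_sets (X - updown X le M N) le.
                D' \<union> down_cl X le N \<in> down_sets_MN X le M N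
              \<and> (D' \<union> down_cl X le N) - down_cl X le N = D')"
    using part_main[OF assms(2,3)] by (intro ballI)
  have fX: "finite (down_sets X le)"
    by (rule finite_subset[of _ "Pow X"]) (auto simp: down_sets_def assms(1))
  have fM: "finite (down_sets M le)"
  proof (rule finite_subset[of _ "Pow M"])
    show "down_sets M le \<subseteq> Pow M" by (auto simp: down_sets_def)
    show "finite (Pow M)" using assms(1,3) by (simp add: finite_subset)
  qed
  have U: "down_sets X le = (\<Union>N \<in> down_sets M le. down_sets_MN X le M N)"
  proof
    show "down_sets X le \<subseteq> (\<Union>N \<in> down_sets M le. down_sets_MN X le M N)"
    proof
      fix D assume D: "D \<in> down_sets X le"
      have "D \<inter> M \<in> down_sets M le" using D assms(3) unfolding down_sets_def by auto
      then show "D \<in> (\<Union>N \<in> down_sets M le. down_sets_MN X le M N)"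
        using D unfolding down_sets_MN_def by auto
    qed
    show "(\<Union>N \<in> down_sets M le. down_sets_MN X le M N) \<subseteq> down_sets X le"
      unfolding down_sets_MN_def by auto
  qed
  have "num_down_sets X le = (\<Sum>N \<in> down_sets M le. card (down_sets_MN X le M N))"
    unfolding num_down_sets_def U
  proof (rule card_UN_disjoint[OF fM])
    show "\<forall>N\<in>down_sets M le. finite (down_sets_MN X le M N)"
    proof
      fix N show "finite (down_sets_MN X le M N)"
        by (rule finite_subset[OF _ fX]) (auto simp: down_sets_MN_def)
    qed
    show "\<forall>N1\<in>down_sets M le. \<forall>N2\<in>down_sets M le. N1 \<noteq> N2 \<longrightarrow>
      down_sets_MN X le M N1 \<inter> down_sets_MN X le M N2 = {}"
      by (auto simp: down_sets_MN_def)
  qed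
  also have "\<dots> = (\<Sum>N \<in> down_sets M le. num_down_sets (X - updown X le M N) le)"
    unfolding num_down_sets_def
  proof (rule sum.cong[OF refl])
    fix N assume "N \<in> down_sets M le"
    then have "bij_betw (\<lambda>D. D - down_cl X le N) (down_sets_MN X le M N)
                     (down_sets (X - updown X le M N) le)" using A by blast
    then show "card (down_sets_MN X le M N) = card (down_sets (X - updown X le M N) le)"
      by (rule bij_betw_same_card)
  qed
  finally show ?thesis by (rule conjI[OF A])
qed

end
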